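(* Let $k>0$ be a constant, $p=k/n$, and $G\sim\mathcal{G}(n,p)$ with $m$ its number of edges. For $1\le u\le n$ define $$w_n(u)=\sum_{i=n-u}^{n}\binom{i}{i-(n-u)}(1-p)^{\binom{i-(n-u)}{2}}\,\mathbb{P}\left(m\ge\frac{n^2}{2u}-\frac{n}{2}\right).$$ Let $\lambda>1$ be the solution of $$2\ln 2-(k+1)+\lambda+(\lambda-1)\ln\frac{k}{\lambda-1}=0,$$ or equivalently $\lambda=1+k\left(1+\phi^{-1}\left(\frac{2}{k}\ln 2\right)\right)$ where $\phi(z)=(1+z)\ln(1+z)-z$. Then for any $u\le n/\lambda$, $w_n(u)$ is bounded by a polynomial in $n$.
   Context: $\mathcal{G}(n,p)$ is the binomial random graph on $n$ vertices in which each of the $\binom{n}{2}$ pairs of vertices is an edge with probability $p$, independently. $w_n(u)$ is the paper's bound on the expected number of nodes with potential $u$ in the best-first branch-and-bound search tree for maximum independent set (potential of a partial solution $S\subseteq\{v_1,\dots,v_i\}$ being $|S|+n-i$). *)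

theory Defs
  imports "HOL-Probability.Probability"
begin

definition vertex_pairs :: "nat \<Rightarrow> (nat \<times> nat) set" where
  "vertex_pairs n = {(i, j). i < j \<and> j < n}"

definition gnp :: "nat \<Rightarrow> real \<Rightarrow> (nat \<times> nat) set pmf" where
  "gnp n p = map_pmf (\<lambda>f. {e \<in> vertex_pairs n. f e})
                     (Pi_pmf (vertex_pairs n) False (\<lambda>_. bernoulli_pmf p))"

definition w :: "real \<Rightarrow> nat \<Rightarrow> nat \<Rightarrow> real" where
  "w k n u = (let p = k / real n in
     (\<Sum>i = n - u..n. real (i choose (i - (n - u))) * (1 - p) ^ ((i - (n - u)) choose 2)
        * measure_pmf.prob (gnp n p)
            {E. real (card E) \<ge> real n ^ 2 / (2 * real u) - real n / 2}))"

end

theory Submission imports Defs begin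

lemma card_vp: "2 * card (vertex_pairs n) = n * (n - 1)"
proof (induction n)
  case 0 then show ?case by (simp add: vertex_pairs_def)
next
  case (Suc n)
  have eq: "vertex_pairs (Suc n) = vertex_pairs n \<union> (\<lambda>i. (i, n)) ` {..<n}"
    by (auto simp: vertex_pairs_def less_Suc_eq)
  have fin: "finite (vertex_pairs n)"
    by (rule finite_subset[of _ "{..<n} \<times> {..<n}"]) (auto simp: vertex_pairs_def)
  have dis: "vertex_pairs n \<inter> (\<lambda>i. (i, n)) ` {..<n} = {}"
    by (auto simp: vertex_pairs_def)
  have "card (vertex_pairs (Suc n)) = card (vertex_pairs n) + n"
    unfolding eq using fin dis by (subst card_Un_disjoint) (auto simp: card_image inj_on_def)
  then show ?case using Suc by (cases n) (auto simp: algebra_simps)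
qed

lemma fin_vp: "finite (vertex_pairs n)"
    by (rule finite_subset[of _ "{..<n} \<times> {..<n}"]) (auto simp: vertex_pairs_def)

lemma chernoff:
  fixes V :: "'a set" and p a t :: real
  assumes V: "finite V" and p: "0 \<le> p" "p \<le> 1" and a: "a \<ge> 1"
  shows "measure_pmf.prob (Pi_pmf V False (\<lambda>_. bernoulli_pmf p)) {f. real (card {e\<in>V. f e}) \<ge> t}
          \<le> (1 - p + p * a) ^ card V / a powr t"
proof -
  let ?M = "Pi_pmf V False (\<lambda>_. bernoulli_pmf p)"
  define u where "u f = (\<Prod>e\<in>V. (if f e then a else 1))" for f :: "'a \<Rightarrow> bool"
  have u_eq: "u f = a ^ card {e\<in>V. f e}" for f
  proof -
    have "u f = (\<Prod>e\<in>V \<inter> {e. f e}. a) * (\<Prod>e\<in>V \<inter> - {e. f e}. 1)"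
      unfolding u_def by (rule prod.If_cases[OF V])
    also have "\<dots> = a ^ card {e\<in>V. f e}" by (simp add: Int_def conj_commute)
    finally show ?thesis .
  qed
  have apos: "a > 0" using a by simp
  have sub: "{f. real (card {e\<in>V. f e}) \<ge> t} \<subseteq> {f \<in> space (measure_pmf ?M). u f \<ge> a powr t}"
  proof safe
    fix f assume "t \<le> real (card {e\<in>V. f e})"
    then have "a powr t \<le> a powr real (card {e\<in>V. f e})" using a by (intro powr_mono) auto
    also have "\<dots> = u f" using apos by (simp add: u_eq powr_realpow)
    finally show "a powr t \<le> u f" .
  qed simp
  have int1: "integrable (measure_pmf (bernoulli_pmf p)) (\<lambda>v. if v then a else 1)" for e :: 'a
    by (rule integrable_measure_pmf_finite) auto
  have int: "integrable (measure_pmf ?M) u"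
    unfolding u_def by (rule integrable_prod_Pi_pmf[OF V]) (use int1 in auto)
  have E: "measure_pmf.expectation ?M u = (1 - p + p * a) ^ card V"
  proof -
    have "measure_pmf.expectation ?M u = (\<Prod>e\<in>V. measure_pmf.expectation (bernoulli_pmf p) (\<lambda>v. if v then a else 1))"
      unfolding u_def by (rule expectation_prod_Pi_pmf[OF V]) (use int1 a in auto)
    also have "\<dots> = (1 - p + p * a) ^ card V" using p by (simp add: algebra_simps)
    finally show ?thesis .
  qed
  have "measure_pmf.prob ?M {f. real (card {e\<in>V. f e}) \<ge> t} \<le> measure_pmf.prob ?M {f \<in> space (measure_pmf ?M). u f \<ge> a powr t}"
    by (rule measure_pmf.finite_measure_mono[OF sub]) simp
  also have "\<dots> \<le> measure_pmf.expectation ?M u / a powr t"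
    by (rule integral_Markov_inequality_measure[OF int, of UNIV])
       (use apos a in \<open>auto simp: u_def intro!: prod_nonneg\<close>)
  finally show ?thesis using E by simp
qed

theorem proposition4:
  fixes k lam :: real
  assumes "k > 0"
    and "lam > 1"
    and "lam \<ge> 1 + k"
    and "2 * ln 2 - (k + 1) + lam + (lam - 1) * ln (k / (lam - 1)) = 0"
  shows "\<exists>C (d::nat) N. \<forall>n \<ge> N. \<forall>u. 1 \<le> u \<and> real u \<le> real n / lam \<longrightarrow>
           w k n u \<le> C * real n ^ d"
proof -
  note kpos = assms(1) and lam1 = assms(2) and lamk = assms(3) and eqn = assms(4)
  define N0 :: nat where "N0 = nat (ceiling k) + 1"
  have N0k: "real N0 > k" unfolding N0_def by linarith
  define a where "a = (lam - 1) / k"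
  have a1: "a \<ge> 1" unfolding a_def using kpos lamk by (simp add: field_simps)
  have apos: "a > 0" using a1 by simp
  have lna: "ln (k / (lam - 1)) = - ln a" unfolding a_def using kpos lam1
    by (simp add: ln_div)
  have key: "(lam - 1 - k) - (lam - 1) * ln a = - 2 * ln 2" using eqn lna by (simp add: algebra_simps)
  have "\<forall>n \<ge> N0. \<forall>u. 1 \<le> u \<and> real u \<le> real n / lam \<longrightarrow> w k n u \<le> 2 * real n ^ 1"
  proof (intro allI impI, elim conjE)
    fix n u :: nat
    assume nN: "N0 \<le> n" and u1: "1 \<le> u" and un: "real u \<le> real n / lam"
    have nk: "real n > k" using nN N0k by linarith
    have npos: "real n > 0" using nk kpos by linarith
    define p where "p = k / real n"
    have p0: "0 \<le> p" and p1: "p \<le> 1" unfolding p_def using kpos nk by auto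
    have ulam: "real u * lam \<le> real n" using un lam1 by (simp add: field_simps)
    have "real u * 1 \<le> real u * lam" using lam1 by (intro mult_left_mono) auto
    then have ule: "u \<le> n" using ulam by simp
    define t0 where "t0 = real n ^ 2 / (2 * real u) - real n / 2"
    define T where "T = (lam - 1) * real n / 2"
    have tT: "T \<le> t0"
    proof -
      have "lam * real n \<le> real n * real n / real u" using ulam u1 npos
        by (simp add: field_simps)
      then show ?thesis unfolding T_def t0_def using u1 by (simp add: field_simps power2_eq_square)
    qed
    define V where "V = vertex_pairs n"
    define P where "P = measure_pmf.prob (gnp n p) {E. real (card E) \<ge> t0}"
    have P0: "P \<ge> 0" unfolding P_def by simp
    have "P = measure_pmf.prob (Pi_pmf V False (\<lambda>_. bernoulli_pmf p)) {f. real (card {e\<in>V. f e}) \<ge> t0}"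
      unfolding P_def gnp_def V_def by (simp add: vimage_def)
    also have "\<dots> \<le> (1 - p + p * a) ^ card V / a powr t0"
      by (rule chernoff[OF _ p0 p1 a1]) (simp add: V_def fin_vp)
    also have "\<dots> \<le> exp (p * (a - 1)) ^ card V / a powr T"
    proof (rule frac_le)
      show "0 \<le> exp (p * (a - 1)) ^ card V" by simp
      have "1 - p + p * a \<le> exp (p * (a - 1))" using exp_ge_add_one_self[of "p * (a-1)"]
        by (simp add: algebra_simps)
      moreover have "0 \<le> 1 - p + p * a" using p0 p1 a1 by (smt (verit) mult_nonneg_nonneg)
      ultimately show "(1 - p + p * a) ^ card V \<le> exp (p * (a - 1)) ^ card V"
        by (rule power_mono)
      show "0 < a powr T" using apos by simp
      show "a powr T \<le> a powr t0" using a1 tT by (intro powr_mono) auto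
    qed
    also have "\<dots> = exp (p * (a - 1) * real (card V) - T * ln a)"
      using apos by (simp add: powr_def exp_diff exp_of_nat_mult[symmetric] mult.commute)
    also have "\<dots> \<le> exp (- real n * ln 2)"
    proof -
      have n1: "1 \<le> n" using npos by simp
      have "real (2 * card V) = real (n * (n - 1))" using card_vp[of n] unfolding V_def by simp
      then have cV: "2 * real (card V) = real n * (real n - 1)" using n1 by (simp add: of_nat_diff)
      have "p * (a - 1) * real (card V) = (lam - 1 - k) * (real n - 1) / 2"
      proof -
        have pa: "p * (a - 1) = (lam - 1 - k) / real n" unfolding p_def a_def using kpos npos
          by (simp add: field_simps)
        have cV': "real (card V) = real n * (real n - 1) / 2" using cV by simp
        show ?thesis unfolding pa cV' using npos by (simp add: field_simps)
      qed
      also have "\<dots> \<le> (lam - 1 - k) * real n / 2" using lamk by (simp add: field_simps)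
      finally have X: "p * (a - 1) * real (card V) \<le> (lam - 1 - k) * real n / 2" .
      have "p * (a - 1) * real (card V) - T * ln a \<le> real n / 2 * ((lam - 1 - k) - (lam - 1) * ln a)"
      proof -
        have "real n / 2 * ((lam - 1 - k) - (lam - 1) * ln a) = (lam - 1 - k) * real n / 2 - T * ln a"
          unfolding T_def by (simp add: field_simps)
        then show ?thesis using X by linarith
      qed
      also have "\<dots> = - real n * ln 2" using key by simp
      finally show ?thesis by simp
    qed
    also have "\<dots> = 1 / 2 ^ n"
    proof -
      have h: "exp (real n * ln 2) = 2 ^ n" by (simp add: exp_of_nat_mult)
      show ?thesis using h by (simp add: exp_minus divide_inverse)
    qed
    finally have Pb: "P \<le> 1 / 2 ^ n" .
    have "w k n u = (\<Sum>i = n - u..n. real (i choose (i - (n - u))) * (1 - p) ^ ((i - (n - u)) choose 2) * P)"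
      unfolding w_def P_def p_def Let_def t0_def by simp
    also have "\<dots> \<le> real (card {n - u..n}) * (2 ^ n * P)"
    proof (rule sum_bounded_above)
      fix i assume i: "i \<in> {n - u..n}"
      have "real (i choose (i - (n - u))) \<le> 2 ^ n"
      proof -
        have "i choose (i - (n - u)) \<le> 2 ^ i" by (rule binomial_le_pow2)
        also have "(2::nat) ^ i \<le> 2 ^ n" using i by (intro power_increasing) auto
        finally show ?thesis by (metis of_nat_le_iff of_nat_numeral of_nat_power)
      qed
      moreover have "(1 - p) ^ ((i - (n - u)) choose 2) \<le> 1" using p0 p1 by (intro power_le_one) auto
      moreover have "(1 - p) ^ ((i - (n - u)) choose 2) \<ge> 0" using p1 by simp
      ultimately have "real (i choose (i - (n - u))) * (1 - p) ^ ((i - (n - u)) choose 2) \<le> 2 ^ n * 1"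
        by (intro mult_mono) auto
      then show "real (i choose (i - (n - u))) * (1 - p) ^ ((i - (n - u)) choose 2) * P \<le> 2 ^ n * P"
        using P0 by (metis mult_right_mono mult_1_right)
    qed
    also have "\<dots> \<le> real (card {n - u..n}) * 1"
    proof (rule mult_left_mono)
      show "2 ^ n * P \<le> 1" using Pb by (simp add: field_simps)
    qed simp
    also have "\<dots> = real u + 1" using ule by simp
    also have "\<dots> \<le> 2 * real n ^ 1" using ule u1 by simp
    finally show "w k n u \<le> 2 * real n ^ 1" .
  qed
  then show ?thesis by blast
qed

end
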